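(* Let $L=1$ and $\vec m=(a,b)\in\mathcal R^2$ be arbitrary. For every topological space $X$ and every $n\ge1$, $\partial_n\circ\mathcal{SD}_n=\mathcal{SD}_{n-1}\circ\partial_n$ as maps $\mathcal K_n(X)\to\mathcal K_{n-1}(X)$ (and trivially for $n=0$).
   Context: $\mathcal R$ is a commutative ring with unit. $\mathcal S_n(X)$ = continuous maps $[0,1]^n\to X$ ($[0,1]^0=\{0\}$), $\mathcal K_n(X)$ the free $\mathcal R$-module on $\mathcal S_n(X)$, $\mathcal K_{-1}(X)=0$. Boundary: for $n\ge1$, $\partial_n(T)=\sum_{j=1}^n(-1)^{j+1}(a\langle T\rangle_{n,0,j}+b\langle T\rangle_{n,1,j})$ where $\langle T\rangle_{n,i,j}(x_1,\dots,x_{n-1})=T(x_1,\dots,x_{j-1},i,x_j,\dots,x_{n-1})$ ($\langle T\rangle_{1,i,1}(0)=T(i)$), extended linearly, $\partial_0=0$. Subdivision maps $\mathcal{SD}_n:\mathcal K_n(X)\to\mathcal K_n(X)$ ($\mathcal R$-linear): $\mathcal{SD}_{-1}=0$, $\mathcal{SD}_0(T)=-T$, and for $n\ge1$ $$\mathcal{SD}_n(T)=\sum_{\vec e\in\{0,2\}^n}\ \sum_{\vec v\in\mathcal V_{\vec e,n}}\Big(-\prod_{i=1}^nv_i\Big)\,T\circ h_{\vec e,\vec v},$$ where $\mathcal V_{\vec e,n}$ is the set of $\vec v\in\{-1,1\}^n$ with $v_i=1$ whenever $e_i=0$ (and $v_i\in\{-1,1\}$ arbitrary when $e_i=2$), and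 $h_{\vec e,\vec v}:[0,1]^n\to[0,1]^n$, $h_{\vec e,\vec v}(x)_i=\frac13(e_i+v_ix_i)$. *)

theory Defs
  imports "HOL-Analysis.Analysis"
begin

text \<open>Coordinates are 0-based: coordinate i here is x_(i+1) of the paper.
  The cube [0,1]^n is represented inside nat \<Rightarrow> real, with coordinates
  i \<ge> n equal to 0 (so [0,1]^0 = {\<lambda>_. 0}).\<close>

definition unit_cube :: "nat \<Rightarrow> (nat \<Rightarrow> real) set" where
  "unit_cube n = {x. (\<forall>i<n. 0 \<le> x i \<and> x i \<le> 1) \<and> (\<forall>i\<ge>n. x i = 0)}"

definition cube_top :: "nat \<Rightarrow> (nat \<Rightarrow> real) topology" where
  "cube_top n = subtopology (powertop_real UNIV) (unit_cube n)"

text \<open>Singular n-cubes S_n(X): continuous maps [0,1]^n \<rightarrow> X, made extensional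
  (value undefined off the cube) so that equality of cubes is equality of maps on [0,1]^n.\<close>
definition singular_cubes :: "nat \<Rightarrow> 'x topology \<Rightarrow> ((nat \<Rightarrow> real) \<Rightarrow> 'x) set" where
  "singular_cubes n X = {T. continuous_map (cube_top n) X T \<and> (\<forall>x. x \<notin> unit_cube n \<longrightarrow> T x = undefined)}"

text \<open>Chains: finitely supported R-valued functions on cubes (the free R-module).\<close>
type_synonym ('x, 'r) chain = "((nat \<Rightarrow> real) \<Rightarrow> 'x) \<Rightarrow> 'r"

definition cube_chains :: "nat \<Rightarrow> 'x topology \<Rightarrow> ('x, 'r::comm_ring_1) chain set" where
  "cube_chains n X = {c. finite {T. c T \<noteq> 0} \<and> (\<forall>T. c T \<noteq> 0 \<longrightarrow> T \<in> singular_cubes n X)}"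

definition basis_chain :: "((nat \<Rightarrow> real) \<Rightarrow> 'x) \<Rightarrow> ('x, 'r::comm_ring_1) chain" where
  "basis_chain T = (\<lambda>S. if S = T then 1 else 0)"

definition lin_ext :: "(((nat \<Rightarrow> real) \<Rightarrow> 'x) \<Rightarrow> ('y, 'r::comm_ring_1) chain)
     \<Rightarrow> ('x, 'r) chain \<Rightarrow> ('y, 'r) chain" where
  "lin_ext f c = (\<lambda>S. \<Sum>T\<in>{T. c T \<noteq> 0}. c T * f T S)"

text \<open>Face \<langle>T\<rangle>_{n,i,j}, with 0-based j (paper's j = this j + 1).\<close>
definition cube_face :: "nat \<Rightarrow> real \<Rightarrow> nat \<Rightarrow> ((nat \<Rightarrow> real) \<Rightarrow> 'x) \<Rightarrow> ((nat \<Rightarrow> real) \<Rightarrow> 'x)" where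
  "cube_face n i j T = (\<lambda>x. if x \<in> unit_cube (n - 1)
      then T (\<lambda>k. if k < j then x k else if k = j then i else x (k - 1)) else undefined)"

definition boundary_cube :: "'r::comm_ring_1 \<Rightarrow> 'r \<Rightarrow> nat \<Rightarrow> ((nat \<Rightarrow> real) \<Rightarrow> 'x) \<Rightarrow> ('x, 'r) chain" where
  "boundary_cube a b n T = (if n = 0 then (\<lambda>_. 0) else
     (\<lambda>S. \<Sum>j<n. (-1) ^ j * (a * basis_chain (cube_face n 0 j T) S + b * basis_chain (cube_face n 1 j T) S)))"

definition boundary :: "'r::comm_ring_1 \<Rightarrow> 'r \<Rightarrow> nat \<Rightarrow> ('x, 'r) chain \<Rightarrow> ('x, 'r) chain" where
  "boundary a b n = lin_ext (boundary_cube a b n)"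

definition sd_map :: "nat \<Rightarrow> (nat \<Rightarrow> real) \<Rightarrow> (nat \<Rightarrow> int) \<Rightarrow> (nat \<Rightarrow> real) \<Rightarrow> (nat \<Rightarrow> real)" where
  "sd_map n e v x = (\<lambda>i. if i < n then (e i + real_of_int (v i) * x i) / 3 else 0)"

definition sd_E :: "nat \<Rightarrow> (nat \<Rightarrow> real) set" where
  "sd_E n = {..<n} \<rightarrow>\<^sub>E {0, 2}"

definition sd_V :: "nat \<Rightarrow> (nat \<Rightarrow> real) \<Rightarrow> (nat \<Rightarrow> int) set" where
  "sd_V n e = {v \<in> {..<n} \<rightarrow>\<^sub>E {-1, 1}. \<forall>i<n. e i = 0 \<longrightarrow> v i = 1}"

definition sd_cube :: "nat \<Rightarrow> ((nat \<Rightarrow> real) \<Rightarrow> 'x) \<Rightarrow> ('x, 'r::comm_ring_1) chain" where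
  "sd_cube n T = (if n = 0 then (\<lambda>S. - basis_chain T S) else
     (\<lambda>S. \<Sum>e\<in>sd_E n. \<Sum>v\<in>sd_V n e.
        (- of_int (\<Prod>i<n. v i)) * basis_chain
           (\<lambda>x. if x \<in> unit_cube n then T (sd_map n e v x) else undefined) S))"

definition subdivision :: "nat \<Rightarrow> ('x, 'r::comm_ring_1) chain \<Rightarrow> ('x, 'r) chain" where
  "subdivision n = lin_ext (sd_cube n)"

end

theory Submission
  imports Defs
begin

abbreviation supp :: "('x,'r::comm_ring_1) chain \<Rightarrow> _" where "supp c \<equiv> {T. c T \<noteq> 0}"

lemma lin_ext_eq:
  assumes "finite A" "supp c \<subseteq> A"
  shows "lin_ext f c S = (\<Sum>T\<in>A. c T * f T S)"
  unfolding lin_ext_def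
  by (rule sum.mono_neutral_left) (use assms in auto)

lemma lin_ext_comp:
  assumes fc: "finite (supp c)" and fg: "\<And>T. finite (supp (g T))"
  shows "lin_ext f (lin_ext g c) = lin_ext (\<lambda>T. lin_ext f (g T)) c"
proof
  fix S
  define A where "A = supp c"
  define B where "B = (\<Union>T\<in>A. supp (g T))"
  have fA: "finite A" using fc A_def by simp
  have fB: "finite B" using fA fg B_def by auto
  have lg: "lin_ext g c U = (\<Sum>T\<in>A. c T * g T U)" for U
    by (rule lin_ext_eq) (use fA A_def in auto)
  have sB: "supp (lin_ext g c) \<subseteq> B"
  proof
    fix U assume "U \<in> supp (lin_ext g c)"
    then have "(\<Sum>T\<in>A. c T * g T U) \<noteq> 0" using lg by simp
    then obtain T where "T \<in> A" "c T * g T U \<noteq> 0" by (meson sum.neutral)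
    then show "U \<in> B" unfolding B_def by (auto intro!: bexI[of _ T])
  qed
  have "lin_ext f (lin_ext g c) S = (\<Sum>U\<in>B. lin_ext g c U * f U S)"
    by (rule lin_ext_eq[OF fB sB])
  also have "\<dots> = (\<Sum>U\<in>B. \<Sum>T\<in>A. c T * g T U * f U S)"
    by (simp add: lg sum_distrib_right)
  also have "\<dots> = (\<Sum>T\<in>A. c T * (\<Sum>U\<in>B. g T U * f U S))"
    by (subst sum.swap) (simp add: sum_distrib_left mult.assoc)
  also have "\<dots> = (\<Sum>T\<in>A. c T * lin_ext f (g T) S)"
    apply (rule sum.cong, simp)
    apply (subst lin_ext_eq[OF fB]) unfolding B_def by auto
  also have "\<dots> = lin_ext (\<lambda>T. lin_ext f (g T)) c S"
    unfolding lin_ext_def A_def by simp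
  finally show "lin_ext f (lin_ext g c) S = lin_ext (\<lambda>T. lin_ext f (g T)) c S" .
qed

lemma lin_ext_sum_gen:
  assumes fI: "finite I" and fc: "\<And>i. i \<in> I \<Longrightarrow> finite (supp (c i))"
  shows "lin_ext f (\<lambda>S. \<Sum>i\<in>I. k i * c i S) S' = (\<Sum>i\<in>I. k i * lin_ext f (c i) S')"
proof -
  define B where "B = (\<Union>i\<in>I. supp (c i))"
  have fB: "finite B" using fI fc B_def by auto
  have sB: "supp (\<lambda>S. \<Sum>i\<in>I. k i * c i S) \<subseteq> B"
  proof
    fix U assume "U \<in> supp (\<lambda>S. \<Sum>i\<in>I. k i * c i S)"
    then have "(\<Sum>i\<in>I. k i * c i U) \<noteq> 0" by simp
    then obtain i where "i \<in> I" "k i * c i U \<noteq> 0" by (meson sum.neutral)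
    then show "U \<in> B" unfolding B_def by (auto intro!: bexI[of _ i])
  qed
  have "lin_ext f (\<lambda>S. \<Sum>i\<in>I. k i * c i S) S' = (\<Sum>U\<in>B. (\<Sum>i\<in>I. k i * c i U) * f U S')"
    by (rule lin_ext_eq[OF fB sB])
  also have "\<dots> = (\<Sum>i\<in>I. k i * (\<Sum>U\<in>B. c i U * f U S'))"
    by (simp add: sum_distrib_right sum_distrib_left mult.assoc) (rule sum.swap)
  also have "\<dots> = (\<Sum>i\<in>I. k i * lin_ext f (c i) S')"
    apply (rule sum.cong, simp)
    apply (subst lin_ext_eq[OF fB]) unfolding B_def by auto
  finally show ?thesis .
qed

lemma supp_basis: "finite (supp (basis_chain T :: ('x,'r::comm_ring_1) chain))"
  by (rule finite_subset[of _ "{T}"]) (auto simp: basis_chain_def)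

lemma lin_ext_basis: "lin_ext f (basis_chain T) S = f T S"
  by (subst lin_ext_eq[of "{T}"]) (auto simp: basis_chain_def)

lemma supp_sum:
  assumes "finite I" "\<And>i. i \<in> I \<Longrightarrow> finite (supp (c i))"
  shows "finite (supp (\<lambda>S. \<Sum>i\<in>I. k i * c i S))"
proof (rule finite_subset)
  show "supp (\<lambda>S. \<Sum>i\<in>I. k i * c i S) \<subseteq> (\<Union>i\<in>I. supp (c i))"
    by (auto intro: ccontr)
qed (use assms in auto)

definition insf :: "nat \<Rightarrow> 'a \<Rightarrow> (nat \<Rightarrow> 'a) \<Rightarrow> nat \<Rightarrow> 'a" where
  "insf j t f = (\<lambda>k. if k < j then f k else if k = j then t else f (k - 1))"
definition insE :: "nat \<Rightarrow> nat \<Rightarrow> 'a \<Rightarrow> (nat \<Rightarrow> 'a) \<Rightarrow> nat \<Rightarrow> 'a" where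
  "insE n j t f = (\<lambda>k. if k < n then insf j t f k else undefined)"
definition delE :: "nat \<Rightarrow> nat \<Rightarrow> (nat \<Rightarrow> 'a) \<Rightarrow> nat \<Rightarrow> 'a" where
  "delE n j f = (\<lambda>k. if k < n - 1 then (if k < j then f k else f (Suc k)) else undefined)"

lemma cube_face_alt:
  "cube_face n i j F = (\<lambda>x. if x \<in> unit_cube (n - 1) then F (insf j i x) else undefined)"
  unfolding cube_face_def insf_def by simp

lemma insf_cube:
  assumes "j < n" "x \<in> unit_cube (n - 1)" "0 \<le> t" "t \<le> 1"
  shows "insf j t x \<in> unit_cube n"
  using assms unfolding unit_cube_def insf_def by auto

lemma sd_map_cube:
  assumes "e \<in> sd_E m" "v \<in> sd_V m e" "x \<in> unit_cube m"
  shows "sd_map m e v x \<in> unit_cube m"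
proof -
  have "0 \<le> (e i + real_of_int (v i) * x i) / 3 \<and> (e i + real_of_int (v i) * x i) / 3 \<le> 1"
    if "i < m" for i
  proof -
    have e: "e i = 0 \<or> e i = 2" using assms(1) that unfolding sd_E_def by auto
    have v: "v i = -1 \<or> v i = 1" "e i = 0 \<longrightarrow> v i = 1" using assms(2) that unfolding sd_V_def by auto
    have x: "0 \<le> x i" "x i \<le> 1" using assms(3) that unfolding unit_cube_def by auto
    show ?thesis using e v x by auto
  qed
  then show ?thesis unfolding unit_cube_def sd_map_def by auto
qed

lemma sd_map_ins:
  assumes "j < n"
  shows "sd_map n (insE n j ej e') (insE n j vj v') (insf j t x)
       = insf j ((ej + real_of_int vj * t) / 3) (sd_map (n - 1) e' v' x)"
  using assms unfolding sd_map_def insE_def insf_def by (auto simp: fun_eq_iff)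

lemma prod_insf:
  assumes "j \<le> m"
  shows "(\<Prod>i<Suc m. insf j t f i) = t * (\<Prod>i<m. (f i :: 'a::comm_monoid_mult))"
  using assms
proof (induction m)
  case 0 then show ?case by (simp add: insf_def)
next
  case (Suc m)
  show ?case
  proof (cases "j = Suc m")
    case True
    have "(\<Prod>i<Suc m. insf j t f i) = (\<Prod>i<Suc m. f i)"
      by (rule prod.cong) (auto simp: insf_def True)
    then show ?thesis by (simp add: True insf_def mult.commute)
  next
    case False
    then have "j \<le> m" using Suc by simp
    then show ?thesis using Suc False by (simp add: insf_def mult.assoc)
  qed
qed

lemma prod_insE:
  assumes "j < n"
  shows "(\<Prod>i<n. insE n j t f i) = t * (\<Prod>i<n - 1. (f i :: 'a::comm_monoid_mult))"
proof -
  obtain m where n: "n = Suc m" using assms by (cases n) auto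
  have "(\<Prod>i<n. insE n j t f i) = (\<Prod>i<Suc m. insf j t f i)"
    by (rule prod.cong) (auto simp: insE_def n)
  then show ?thesis using prod_insf[of j m t f] assms n by simp
qed

definition P3 :: "(real \<times> int) set" where "P3 = {(0, 1), (2, -1), (2, 1)}"

lemma ins_del:
  assumes "j < n" "e \<in> extensional {..<n}"
  shows "insE n j (e j) (delE n j e) = e"
proof
  fix k show "insE n j (e j) (delE n j e) k = e k"
  proof (cases "k < n")
    case True
    consider "k < j" | "k = j" | "j < k" by linarith
    then show ?thesis
    proof cases
      case 1 then have "k < n - 1" using assms(1) by linarith
      then show ?thesis using 1 True unfolding insE_def delE_def insf_def by simp
    next
      case 2 then show ?thesis using True unfolding insE_def delE_def insf_def by simp
    next
      case 3 then have "k - 1 < n - 1" "\<not> k - 1 < j" "Suc (k - 1) = k" using True by linarith+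
      then show ?thesis using 3 True unfolding insE_def delE_def insf_def by simp
    qed
  next
    case False then have "e k = undefined" using extensional_arb[OF assms(2)] by simp
    then show ?thesis using False unfolding insE_def by simp
  qed
qed

lemma del_ins:
  assumes "j < n" "e \<in> extensional {..<n-1}"
  shows "delE n j (insE n j t e) = e"
proof
  fix k show "delE n j (insE n j t e) k = e k"
  proof (cases "k < n - 1")
    case True
    show ?thesis
    proof (cases "k < j")
      case True2: True
      then have "k < n" using True by linarith
      then show ?thesis using True True2 unfolding insE_def delE_def insf_def by simp
    next
      case False2: False
      then have "Suc k < n" "\<not> Suc k < j" "Suc k \<noteq> j" using True by linarith+
      then show ?thesis using True False2 unfolding insE_def delE_def insf_def by simp
    qed
  next
    case False then have "e k = undefined" using extensional_arb[OF assms(2)] by simp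
    then show ?thesis using False unfolding delE_def by simp
  qed
qed

lemma insE_j: "j < n \<Longrightarrow> insE n j t e j = t"
  by (simp add: insE_def insf_def)

lemma del_mem:
  assumes "j < n" "e \<in> sd_E n" "v \<in> sd_V n e"
  shows "(e j, v j) \<in> P3" "delE n j e \<in> sd_E (n - 1)" "delE n j v \<in> sd_V (n - 1) (delE n j e)"
proof -
  have e: "e \<in> {..<n} \<rightarrow>\<^sub>E {0, 2}" and v: "v \<in> {..<n} \<rightarrow>\<^sub>E {-1, 1}"
      and ev: "\<forall>i<n. e i = 0 \<longrightarrow> v i = 1"
    using assms unfolding sd_E_def sd_V_def by auto
  show "(e j, v j) \<in> P3" using e v ev assms(1) unfolding P3_def by auto
  show "delE n j e \<in> sd_E (n - 1)" using e unfolding sd_E_def delE_def by (auto simp: PiE_iff extensional_def)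
  show "delE n j v \<in> sd_V (n - 1) (delE n j e)" using v ev unfolding sd_V_def delE_def
    by (auto simp: PiE_iff extensional_def)
qed

lemma ins_mem:
  assumes "j < n" "r \<in> P3" "e \<in> sd_E (n - 1)" "v \<in> sd_V (n - 1) e"
  shows "insE n j (fst r) e \<in> sd_E n" "insE n j (snd r) v \<in> sd_V n (insE n j (fst r) e)"
proof -
  have e: "e \<in> {..<n-1} \<rightarrow>\<^sub>E {0, 2}" and v: "v \<in> {..<n-1} \<rightarrow>\<^sub>E {-1, 1}"
      and ev: "\<forall>i<n-1. e i = 0 \<longrightarrow> v i = 1"
    using assms unfolding sd_E_def sd_V_def by auto
  show "insE n j (fst r) e \<in> sd_E n" using e assms(1,2) unfolding sd_E_def insE_def insf_def P3_def
    by (auto simp: PiE_iff extensional_def)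
  have r: "r = (0,1) \<or> r = (2,-1) \<or> r = (2,1)" using assms(2) unfolding P3_def by auto
  have A: "insE n j (snd r) v \<in> {..<n} \<rightarrow>\<^sub>E {-1,1}"
    using v r assms(1) unfolding insE_def insf_def by (auto simp: PiE_iff extensional_def)
  have B: "insE n j (snd r) v i = 1" if "i < n" "insE n j (fst r) e i = 0" for i
  proof -
    consider "i < j" | "i = j" | "i > j" by linarith
    then show ?thesis
    proof cases
      case 1 then show ?thesis using that ev assms(1) unfolding insE_def insf_def by auto
    next
      case 2 then show ?thesis using that r unfolding insE_def insf_def by auto
    next
      case 3 then have "i - 1 < n - 1" using that by linarith
      then show ?thesis using that ev 3 unfolding insE_def insf_def by auto
    qed
  qed
  show "insE n j (snd r) v \<in> sd_V n (insE n j (fst r) e)"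
    using A B unfolding sd_V_def by auto
qed

lemma reindex_EV:
  fixes h :: "(nat \<Rightarrow> real) \<times> (nat \<Rightarrow> int) \<Rightarrow> 'a::comm_monoid_add"
  assumes "j < n"
  shows "(\<Sum>p\<in>Sigma (sd_E n) (sd_V n). h p)
       = (\<Sum>r\<in>P3. \<Sum>q\<in>Sigma (sd_E (n - 1)) (sd_V (n - 1)).
             h (insE n j (fst r) (fst q), insE n j (snd r) (snd q)))"
proof -
  define SS where "SS = Sigma (sd_E n) (sd_V n)"
  define TT where "TT = P3 \<times> Sigma (sd_E (n - 1)) (sd_V (n - 1))"
  define jf :: "(nat \<Rightarrow> real) \<times> (nat \<Rightarrow> int) \<Rightarrow> (real \<times> int) \<times> (nat \<Rightarrow> real) \<times> (nat \<Rightarrow> int)"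
    where "jf = (\<lambda>p. ((fst p j, snd p j), (delE n j (fst p), delE n j (snd p))))"
  define iF :: "(real \<times> int) \<times> (nat \<Rightarrow> real) \<times> (nat \<Rightarrow> int) \<Rightarrow> (nat \<Rightarrow> real) \<times> (nat \<Rightarrow> int)"
    where "iF = (\<lambda>rq. (insE n j (fst (fst rq)) (fst (snd rq)), insE n j (snd (fst rq)) (snd (snd rq))))"
  have w1: "iF (jf a) = a" if a: "a \<in> SS" for a
  proof -
    have x: "fst a \<in> extensional {..<n}" "snd a \<in> extensional {..<n}"
      using a unfolding SS_def sd_E_def sd_V_def by (auto simp: PiE_def)
    show ?thesis unfolding iF_def jf_def
      using ins_del[OF assms x(1)] ins_del[OF assms x(2)] by simp
  qed
  have w2: "jf a \<in> TT" if a: "a \<in> SS" for a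
    using del_mem[OF assms, of "fst a" "snd a"] a unfolding jf_def TT_def SS_def by auto
  have w3: "jf (iF b) = b" if b: "b \<in> TT" for b
  proof -
    have x: "fst (snd b) \<in> extensional {..<n-1}" "snd (snd b) \<in> extensional {..<n-1}"
      using b unfolding TT_def sd_E_def sd_V_def by (auto simp: PiE_def)
    show ?thesis unfolding iF_def jf_def
      using del_ins[OF assms x(1)] del_ins[OF assms x(2)]
        insE_j[OF assms, of "fst (fst b)" "fst (snd b)"] insE_j[OF assms, of "snd (fst b)" "snd (snd b)"]
      by (simp add: prod_eq_iff)
  qed
  have w4: "iF b \<in> SS" if b: "b \<in> TT" for b
    using ins_mem[OF assms, of "fst b" "fst (snd b)" "snd (snd b)"] b unfolding iF_def TT_def SS_def
    by auto
  have "sum h SS = sum (\<lambda>rq. h (iF rq)) TT"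
    by (rule sum.reindex_bij_witness[of SS iF jf TT "\<lambda>rq. h (iF rq)" h])
       (use w1 w2 w3 w4 in auto)
  also have "\<dots> = (\<Sum>r\<in>P3. \<Sum>q\<in>Sigma (sd_E (n - 1)) (sd_V (n - 1)).
             h (insE n j (fst r) (fst q), insE n j (snd r) (snd q)))"
    unfolding TT_def iF_def by (simp add: sum.cartesian_product case_prod_unfold)
  finally show ?thesis unfolding SS_def .
qed

lemma unit_cube_0: "unit_cube 0 = {\<lambda>_. 0}"
  unfolding unit_cube_def by auto

lemma sd_E_0: "sd_E 0 = {\<lambda>_. undefined}"
  unfolding sd_E_def by simp

lemma sd_V_0: "sd_V 0 e = {\<lambda>_. undefined}"
  unfolding sd_V_def by simp

lemma finite_E: "finite (sd_E m)"
  unfolding sd_E_def by (auto intro: finite_PiE)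

lemma finite_V: "finite (sd_V m e)"
  unfolding sd_V_def by (rule finite_subset[of _ "{..<m} \<rightarrow>\<^sub>E {-1, 1}"]) (auto intro: finite_PiE)

lemma sum_Sigma_EV:
  "(\<Sum>e\<in>sd_E m. \<Sum>v\<in>sd_V m e. g e v) = (\<Sum>p\<in>Sigma (sd_E m) (sd_V m). g (fst p) (snd p))"
  by (subst sum.Sigma[OF finite_E]) (auto simp: finite_V case_prod_unfold)

definition THf :: "nat \<Rightarrow> ((nat \<Rightarrow> real) \<Rightarrow> 'x) \<Rightarrow> (nat \<Rightarrow> real) \<Rightarrow> (nat \<Rightarrow> int) \<Rightarrow> (nat \<Rightarrow> real) \<Rightarrow> 'x"
  where "THf m F e v = (\<lambda>x. if x \<in> unit_cube m then F (sd_map m e v x) else undefined)"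

lemma sd_cube_alt:
  assumes "\<And>x. x \<notin> unit_cube m \<Longrightarrow> F x = undefined"
  shows "sd_cube m F = (\<lambda>S. \<Sum>p\<in>Sigma (sd_E m) (sd_V m).
            (- of_int (\<Prod>i<m. snd p i)) * basis_chain (THf m F (fst p) (snd p)) S)"
proof (cases "m = 0")
  case True
  have "THf 0 F (\<lambda>_. undefined) (\<lambda>_. undefined) = F"
  proof
    fix x show "THf 0 F (\<lambda>_. undefined) (\<lambda>_. undefined) x = F x"
    proof (cases "x = (\<lambda>_. 0)")
      case True then show ?thesis unfolding THf_def sd_map_def unit_cube_0 by simp
    next
      case False
      then have "F x = undefined" using assms[of x] \<open>m = 0\<close> unit_cube_0 by simp
      then show ?thesis using False unfolding THf_def unit_cube_0 by simp
    qed
  qed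
  moreover have "Sigma (sd_E 0) (sd_V 0) = {(\<lambda>_. undefined, \<lambda>_. undefined)}"
    unfolding sd_E_0 sd_V_0 by auto
  ultimately show ?thesis using True unfolding sd_cube_def by simp
next
  case False
  show ?thesis using False unfolding sd_cube_def THf_def
    by (simp add: sum_Sigma_EV)
qed

definition Gf :: "nat \<Rightarrow> nat \<Rightarrow> ((nat \<Rightarrow> real) \<Rightarrow> 'x) \<Rightarrow> real \<Rightarrow> (nat \<Rightarrow> real) \<Rightarrow> (nat \<Rightarrow> int) \<Rightarrow> (nat \<Rightarrow> real) \<Rightarrow> 'x"
  where "Gf n j T t e v = (\<lambda>x. if x \<in> unit_cube (n - 1) then T (insf j t (sd_map (n - 1) e v x)) else undefined)"

lemma face_TH:
  assumes "j < n" "0 \<le> i" "i \<le> 1"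
  shows "cube_face n i j (THf n T (insE n j ej e') (insE n j vj v'))
       = Gf n j T ((ej + real_of_int vj * i) / 3) e' v'"
proof
  fix x show "cube_face n i j (THf n T (insE n j ej e') (insE n j vj v')) x
       = Gf n j T ((ej + real_of_int vj * i) / 3) e' v' x"
  proof (cases "x \<in> unit_cube (n - 1)")
    case True
    then have "insf j i x \<in> unit_cube n" using insf_cube assms by blast
    then show ?thesis using True unfolding cube_face_alt THf_def Gf_def sd_map_ins[OF assms(1)] by simp
  next
    case False then show ?thesis unfolding cube_face_alt Gf_def by simp
  qed
qed

lemma face_sd:
  assumes "j < n" "0 \<le> i" "i \<le> 1" "e \<in> sd_E (n - 1)" "v \<in> sd_V (n - 1) e"
  shows "THf (n - 1) (cube_face n i j T) e v = Gf n j T i e v"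
proof
  fix x show "THf (n - 1) (cube_face n i j T) e v x = Gf n j T i e v x"
  proof (cases "x \<in> unit_cube (n - 1)")
    case True
    then have "sd_map (n - 1) e v x \<in> unit_cube (n - 1)" using sd_map_cube assms by blast
    then show ?thesis using True unfolding cube_face_alt THf_def Gf_def by simp
  next
    case False then show ?thesis unfolding THf_def Gf_def by simp
  qed
qed

lemma lin_ext_2:
  assumes "finite (supp c1)" "finite (supp c2)"
  shows "lin_ext f (\<lambda>S. a * c1 S + b * c2 S) S' = a * lin_ext f c1 S' + b * lin_ext f c2 S'"
proof -
  have "(\<lambda>S. a * c1 S + b * c2 S) = (\<lambda>S. \<Sum>i\<in>{0::nat, 1}. (if i = 0 then a else b) * (if i = 0 then c1 else c2) S)"
    by simp
  then show ?thesis using lin_ext_sum_gen[of "{0::nat, 1}" "\<lambda>i. if i = 0 then c1 else c2" f "\<lambda>i. if i = 0 then a else b" S'] assms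
    by simp
qed

lemma supp_sd: "finite (supp (sd_cube m F :: ('x,'r::comm_ring_1) chain))"
proof (cases "m = 0")
  case True then show ?thesis unfolding sd_cube_def
    by (rule_tac finite_subset[OF _ supp_basis[of F]]) auto
next
  case False
  have eq: "sd_cube m F = (\<lambda>S. \<Sum>e\<in>sd_E m. (1::'r) * (\<lambda>S. \<Sum>v\<in>sd_V m e. (- of_int (\<Prod>i<m. v i)) * basis_chain (THf m F e v) S) S)"
    using False unfolding sd_cube_def THf_def by simp
  show ?thesis unfolding eq
    by (intro supp_sum finite_E finite_V supp_basis)
qed

lemma supp_bd: "finite (supp (boundary_cube a b n F))"
proof (cases "n = 0")
  case True then show ?thesis unfolding boundary_cube_def by simp
next
  case False
  have eq: "boundary_cube a b n F = (\<lambda>S. \<Sum>j<n. (-1)^j * (\<lambda>S. \<Sum>i\<in>{0::nat,1}. (if i = 0 then a else b) * basis_chain (cube_face n (real i) j F) S) S)"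
    using False unfolding boundary_cube_def by simp
  show ?thesis unfolding eq
    by (intro supp_sum finite_lessThan supp_basis) auto
qed

lemma sd_cube_pos:
  assumes "m \<noteq> 0"
  shows "sd_cube m F = (\<lambda>S. \<Sum>p\<in>Sigma (sd_E m) (sd_V m).
            (- of_int (\<Prod>i<m. snd p i)) * basis_chain (THf m F (fst p) (snd p)) S)"
  using assms unfolding sd_cube_def THf_def by (simp add: sum_Sigma_EV)

lemma sd_face:
  assumes "j < n" "0 \<le> i" "i \<le> 1"
  shows "sd_cube (n - 1) (cube_face n i j T) S = (\<Sum>q\<in>Sigma (sd_E (n - 1)) (sd_V (n - 1)).
     (- of_int (\<Prod>k<n - 1. snd q k)) * basis_chain (Gf n j T i (fst q) (snd q)) S)"
proof -
  have eq: "sd_cube (n - 1) (cube_face n i j T) = (\<lambda>S. \<Sum>p\<in>Sigma (sd_E (n - 1)) (sd_V (n - 1)).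
            (- of_int (\<Prod>i<n - 1. snd p i)) * basis_chain (THf (n - 1) (cube_face n i j T) (fst p) (snd p)) S)"
    by (rule sd_cube_alt) (simp add: cube_face_def)
  show ?thesis unfolding eq
  proof (intro sum.cong refl)
    fix p assume "p \<in> Sigma (sd_E (n - 1)) (sd_V (n - 1))"
    then show "(- of_int (\<Prod>i<n - 1. snd p i)) * basis_chain (THf (n - 1) (cube_face n i j T) (fst p) (snd p)) S
       = (- of_int (\<Prod>k<n - 1. snd p k)) * basis_chain (Gf n j T i (fst p) (snd p)) S"
      using face_sd[OF assms, of "fst p" "snd p" T] by auto
  qed
qed

lemma per_j:
  fixes a b :: "'r::comm_ring_1"
  assumes "j < n"
  shows "(\<Sum>p\<in>Sigma (sd_E n) (sd_V n). (- of_int (\<Prod>i<n. snd p i)) *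
      (a * basis_chain (cube_face n 0 j (THf n T (fst p) (snd p))) S
     + b * basis_chain (cube_face n 1 j (THf n T (fst p) (snd p))) S))
   = a * sd_cube (n - 1) (cube_face n 0 j T) S + b * sd_cube (n - 1) (cube_face n 1 j T) S"
proof -
  define Q where "Q = Sigma (sd_E (n - 1)) (sd_V (n - 1))"
  define K :: "(nat \<Rightarrow> real) \<times> (nat \<Rightarrow> int) \<Rightarrow> 'r" where "K q = - of_int (\<Prod>k<n - 1. snd q k)" for q
  define B :: "real \<Rightarrow> (nat \<Rightarrow> real) \<times> (nat \<Rightarrow> int) \<Rightarrow> 'r"
    where "B t q = basis_chain (Gf n j T t (fst q) (snd q)) S" for t q
  have "(\<Sum>p\<in>Sigma (sd_E n) (sd_V n). (- of_int (\<Prod>i<n. snd p i)) *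
      (a * basis_chain (cube_face n 0 j (THf n T (fst p) (snd p))) S
     + b * basis_chain (cube_face n 1 j (THf n T (fst p) (snd p))) S))
     = (\<Sum>r\<in>P3. \<Sum>q\<in>Q. (- of_int (\<Prod>i<n. insE n j (snd r) (snd q) i)) *
      (a * basis_chain (cube_face n 0 j (THf n T (insE n j (fst r) (fst q)) (insE n j (snd r) (snd q)))) S
     + b * basis_chain (cube_face n 1 j (THf n T (insE n j (fst r) (fst q)) (insE n j (snd r) (snd q)))) S))"
    unfolding Q_def by (rule reindex_EV[OF assms, where h = "\<lambda>p. (- of_int (\<Prod>i<n. snd p i)) *
      (a * basis_chain (cube_face n 0 j (THf n T (fst p) (snd p))) S
     + b * basis_chain (cube_face n 1 j (THf n T (fst p) (snd p))) S)", simplified fst_conv snd_conv])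
  also have "\<dots> = (\<Sum>r\<in>P3. \<Sum>q\<in>Q. of_int (snd r) * K q *
      (a * B (fst r / 3) q + b * B ((fst r + real_of_int (snd r)) / 3) q))"
  proof (intro sum.cong refl)
    fix r q
    have f0: "cube_face n 0 j (THf n T (insE n j (fst r) (fst q)) (insE n j (snd r) (snd q)))
        = Gf n j T (fst r / 3) (fst q) (snd q)"
      using face_TH[OF assms, of 0 T "fst r" "fst q" "snd r" "snd q"] by simp
    have f1: "cube_face n 1 j (THf n T (insE n j (fst r) (fst q)) (insE n j (snd r) (snd q)))
        = Gf n j T ((fst r + real_of_int (snd r)) / 3) (fst q) (snd q)"
      using face_TH[OF assms, of 1 T "fst r" "fst q" "snd r" "snd q"] by simp
    have pr: "(\<Prod>i<n. insE n j (snd r) (snd q) i) = snd r * (\<Prod>i<n - 1. snd q i)"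
      by (rule prod_insE[OF assms])
    show "(- of_int (\<Prod>i<n. insE n j (snd r) (snd q) i)) *
      (a * basis_chain (cube_face n 0 j (THf n T (insE n j (fst r) (fst q)) (insE n j (snd r) (snd q)))) S
     + b * basis_chain (cube_face n 1 j (THf n T (insE n j (fst r) (fst q)) (insE n j (snd r) (snd q)))) S)
     = of_int (snd r) * K q * (a * B (fst r / 3) q + b * B ((fst r + real_of_int (snd r)) / 3) q)"
      unfolding f0 f1 pr K_def B_def by simp
  qed
  also have "\<dots> = (\<Sum>q\<in>Q. \<Sum>r\<in>P3. of_int (snd r) * K q *
      (a * B (fst r / 3) q + b * B ((fst r + real_of_int (snd r)) / 3) q))"
    by (rule sum.swap)
  also have "\<dots> = (\<Sum>q\<in>Q. K q * (a * B 0 q + b * B 1 q))"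
    by (rule sum.cong) (simp_all add: P3_def algebra_simps)
  also have "\<dots> = a * (\<Sum>q\<in>Q. K q * B 0 q) + b * (\<Sum>q\<in>Q. K q * B 1 q)"
    by (simp add: sum_distrib_left sum.distrib algebra_simps)
  also have "\<dots> = a * sd_cube (n - 1) (cube_face n 0 j T) S + b * sd_cube (n - 1) (cube_face n 1 j T) S"
  proof -
    have s0: "sd_cube (n - 1) (cube_face n 0 j T) S = (\<Sum>q\<in>Q. K q * B 0 q)"
      unfolding K_def B_def Q_def by (rule sd_face[OF assms]) auto
    have s1: "sd_cube (n - 1) (cube_face n 1 j T) S = (\<Sum>q\<in>Q. K q * B 1 q)"
      unfolding K_def B_def Q_def by (rule sd_face[OF assms]) auto
    show ?thesis unfolding s0 s1 ..
  qed
  finally show ?thesis .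
qed

lemma supp_2:
  assumes "finite (supp c1)" "finite (supp c2)"
  shows "finite (supp (\<lambda>S. a * c1 S + b * c2 S))"
  by (rule finite_subset[of _ "supp c1 \<union> supp c2"]) (use assms in auto)

lemma cube_main:
  fixes a b :: "'r::comm_ring_1"
  assumes n: "n \<ge> 1"
  shows "lin_ext (boundary_cube a b n) (sd_cube n T) = lin_ext (sd_cube (n - 1)) (boundary_cube a b n T)"
proof
  fix S
  define Sg where "Sg = Sigma (sd_E n) (sd_V n)"
  define K :: "(nat \<Rightarrow> real) \<times> (nat \<Rightarrow> int) \<Rightarrow> 'r" where "K p = - of_int (\<Prod>i<n. snd p i)" for p
  have n0: "n \<noteq> 0" using n by simp
  have fSg: "finite Sg" unfolding Sg_def using finite_E finite_V by auto
  have "lin_ext (boundary_cube a b n) (sd_cube n T) S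
      = lin_ext (boundary_cube a b n) (\<lambda>S. \<Sum>p\<in>Sg. K p * basis_chain (THf n T (fst p) (snd p)) S) S"
    unfolding sd_cube_pos[OF n0] Sg_def K_def ..
  also have "\<dots> = (\<Sum>p\<in>Sg. K p * boundary_cube a b n (THf n T (fst p) (snd p)) S)"
    by (subst lin_ext_sum_gen[OF fSg supp_basis]) (simp add: lin_ext_basis)
  also have "\<dots> = (\<Sum>p\<in>Sg. \<Sum>j<n. (-1)^j * (K p * (a * basis_chain (cube_face n 0 j (THf n T (fst p) (snd p))) S
     + b * basis_chain (cube_face n 1 j (THf n T (fst p) (snd p))) S)))"
    using n0 unfolding boundary_cube_def by (simp add: sum_distrib_left algebra_simps)
  also have "\<dots> = (\<Sum>j<n. (-1)^j * (\<Sum>p\<in>Sg. K p * (a * basis_chain (cube_face n 0 j (THf n T (fst p) (snd p))) S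
     + b * basis_chain (cube_face n 1 j (THf n T (fst p) (snd p))) S)))"
    by (subst sum.swap) (simp add: sum_distrib_left)
  also have "\<dots> = (\<Sum>j<n. (-1)^j * (a * sd_cube (n - 1) (cube_face n 0 j T) S + b * sd_cube (n - 1) (cube_face n 1 j T) S))"
  proof (rule sum.cong[OF refl])
    fix j assume "j \<in> {..<n}"
    then have jn: "j < n" by simp
    show "(-1)^j * (\<Sum>p\<in>Sg. K p * (a * basis_chain (cube_face n 0 j (THf n T (fst p) (snd p))) S
     + b * basis_chain (cube_face n 1 j (THf n T (fst p) (snd p))) S))
      = (-1)^j * (a * sd_cube (n - 1) (cube_face n 0 j T) S + b * sd_cube (n - 1) (cube_face n 1 j T) S)"
      by (simp only: Sg_def K_def per_j[OF jn])
  qed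
  also have "\<dots> = lin_ext (sd_cube (n - 1)) (boundary_cube a b n T) S"
  proof -
    have "boundary_cube a b n T = (\<lambda>S. \<Sum>j<n. (-1)^j * (\<lambda>S. a * basis_chain (cube_face n 0 j T) S + b * basis_chain (cube_face n 1 j T) S) S)"
      using n0 unfolding boundary_cube_def by simp
    then show ?thesis
      by (simp add: lin_ext_sum_gen supp_2 supp_basis lin_ext_2 lin_ext_basis)
  qed
  finally show "lin_ext (boundary_cube a b n) (sd_cube n T) S = lin_ext (sd_cube (n - 1)) (boundary_cube a b n T) S" .
qed

theorem lemma3:
  fixes X :: "'x topology" and a b :: "'r::comm_ring_1" and n :: nat
    and c :: "('x, 'r) chain"
  assumes "n \<ge> 1" and "c \<in> cube_chains n X"
  shows "boundary a b n (subdivision n c) = subdivision (n - 1) (boundary a b n c)"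
proof -
  have fc: "finite (supp c)" using assms(2) unfolding cube_chains_def by simp
  have "boundary a b n (subdivision n c) = lin_ext (\<lambda>T. lin_ext (boundary_cube a b n) (sd_cube n T)) c"
    unfolding boundary_def subdivision_def by (rule lin_ext_comp[OF fc supp_sd])
  also have "\<dots> = lin_ext (\<lambda>T. lin_ext (sd_cube (n - 1)) (boundary_cube a b n T)) c"
    by (simp only: cube_main[OF assms(1)])
  also have "\<dots> = subdivision (n - 1) (boundary a b n c)"
    unfolding boundary_def subdivision_def by (rule lin_ext_comp[OF fc supp_bd, symmetric])
  finally show ?thesis .
qed

end
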